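(* Let $d\ge2$ and $R,S\subset\mathbb{Z}_d$. Then $\mathrm{ZMF}^{\mathrm{gr}}_{\mathrm{bi}}(\hat P_R,\hat P_S)=\mathbb{C}\,1$ if $R=S$, and $\mathrm{ZMF}^{\mathrm{gr}}_{\mathrm{bi}}(\hat P_R,\hat P_S)=0$ otherwise.
   Context: Let $\eta=e^{2\pi i/d}$. Graded matrix bifactorisations of $x^d$: $\mathbb{Z}_2$-graded free $\mathbb{C}[x,y]$-modules $M$ with a $\mathbb{C}$-grading compatible with the module structure, where $x,y$ have $\mathbb{C}$-degree $2/d$, and an odd $\mathbb{C}[x,y]$-linear $d^M$ of $\mathbb{C}$-degree $1$ with $d^M\circ d^M=(x^d-y^d)1_M$. $\mathrm{ZMF}^{\mathrm{gr}}_{\mathrm{bi}}(M,N)$ is the space of even $\mathbb{C}[x,y]$-linear maps $f:M\to N$ of $\mathbb{C}$-degree $0$ with $d^Nf=fd^M$. For $S\subset\mathbb{Z}_d$ and $\alpha\in\mathbb{C}$, $P_S\{\alpha\}$ has even part $\mathbb{C}[x,y]$ with $1$ in degree $\alpha$, odd part $\mathbb{C}[x,y]$ with $1$ in degree $\alpha+\frac2d|S|-1$, $d_1=\prod_{j\in S}(x-\eta^jy)$ (odd to even), $d_0=\prod_{j\notin S}(x-\eta^jy)$ (even to odd). $\hat P_S:=P_S\{\frac{1-|S|}{d}\}$. *)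

theory Defs
  imports Complex_Main "HOL-Computational_Algebra.Polynomial"
begin

text \<open>C[x,y] is modelled as complex poly poly: an element p is
  sum over j of (coeff p j)(x) * y^j.  So x = [:[:0,1:]:], y = [:0,1:].\<close>

definition xP :: "complex poly poly" where "xP = [:[:0, 1:]:]"
definition yP :: "complex poly poly" where "yP = [:0, 1:]"
definition cP :: "complex \<Rightarrow> complex poly poly" where "cP c = [:[:c:]:]"

definition eta :: "nat \<Rightarrow> complex" where "eta d = cis (2 * pi / real d)"

definition lin :: "nat \<Rightarrow> nat \<Rightarrow> complex poly poly" where
  "lin d j = xP - cP (eta d ^ j) * yP"

text \<open>p is homogeneous of C-degree c, where x and y have C-degree 2/d
  (the zero polynomial is homogeneous of every degree).\<close>
definition homog :: "nat \<Rightarrow> complex poly poly \<Rightarrow> complex \<Rightarrow> bool" where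
  "homog d p c \<longleftrightarrow> (\<forall>i j. coeff (coeff p j) i \<noteq> 0 \<longrightarrow> 2 * of_nat (i + j) / of_nat d = c)"

text \<open>Graded matrix bifactorisation with even and odd part both free of rank one:
  generator degrees deg0 (even), deg1 (odd), differential d1 (odd to even), d0 (even to odd).\<close>
record rk1mf =
  deg0 :: complex
  deg1 :: complex
  dd1 :: "complex poly poly"
  dd0 :: "complex poly poly"

definition P :: "nat \<Rightarrow> nat set \<Rightarrow> complex \<Rightarrow> rk1mf" where
  "P d S \<alpha> = \<lparr> deg0 = \<alpha>, deg1 = \<alpha> + 2 / of_nat d * of_nat (card S) - 1,
     dd1 = (\<Prod>j\<in>S. lin d j), dd0 = (\<Prod>j\<in>{..<d} - S. lin d j) \<rparr>"

definition Phat :: "nat \<Rightarrow> nat set \<Rightarrow> rk1mf" where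
  "Phat d S = P d S ((1 - of_nat (card S)) / of_nat d)"

text \<open>Even C[x,y]-linear maps M \<rightarrow> N between rank (1|1) free modules are pairs (f0,f1)
  (multiplication on the even / odd generator); C-degree 0 and commutation with
  the differentials.\<close>
definition ZMF :: "nat \<Rightarrow> rk1mf \<Rightarrow> rk1mf \<Rightarrow> (complex poly poly \<times> complex poly poly) set" where
  "ZMF d M N = {(f0, f1). homog d f0 (deg0 M - deg0 N) \<and> homog d f1 (deg1 M - deg1 N)
      \<and> dd0 N * f0 = f1 * dd0 M \<and> dd1 N * f1 = f0 * dd1 M}"

end

theory Submission
  imports Defs
begin

definition ev :: "complex \<Rightarrow> complex \<Rightarrow> complex poly poly \<Rightarrow> complex" where
  "ev x y p = poly (poly p [:y:]) x"

lemma ev_mult[simp]: "ev x y (p * q) = ev x y p * ev x y q"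
  by (simp add: ev_def)

lemma ev_prod[simp]: "ev x y (prod f A) = (\<Prod>a\<in>A. ev x y (f a))"
  by (simp add: ev_def poly_prod)

lemma ev_lin[simp]: "ev x y (lin d j) = x - eta d ^ j * y"
  by (simp add: ev_def lin_def xP_def yP_def cP_def)

lemma ev_cP[simp]: "ev x y (cP c) = c"
  by (simp add: ev_def cP_def)

lemma eta_pow1:
  assumes "0 < m" "m < d" shows "eta d ^ m \<noteq> 1"
proof
  assume h: "eta d ^ m = 1"
  have "cis (real m * (2 * pi / real d)) = 1" using h by (simp add: eta_def DeMoivre)
  then have "cos (real m * (2 * pi / real d)) = 1"
    by (metis Re_complex_of_real cis.sel(1) of_real_1)
  then obtain n :: int where n: "real m * (2 * pi / real d) = real_of_int n * 2 * pi"
    using cos_one_2pi_int by blast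
  have dpos: "real d > 0" using assms by simp
  from n have "real m = real_of_int n * real d" using dpos by (simp add: field_simps)
  then have "int m = n * int d" by (metis of_int_eq_iff of_int_mult of_int_of_nat_eq)
  moreover have "0 < int m" "int m < int d" using assms by auto
  ultimately show False
    by (metis mult_cancel_right1 mult_le_cancel_right1 not_less of_nat_0_less_iff zero_less_mult_pos2 int_one_le_iff_zero_less less_le_trans nless_le)
qed

lemma eta_inj:
  assumes "j < d" "k < d" "eta d ^ j = eta d ^ k" shows "j = k"
proof (rule ccontr)
  assume ne: "j \<noteq> k"
  have nz: "eta d \<noteq> 0" by (simp add: eta_def)
  { fix a b :: nat assume ab: "a < b" "b < d" "eta d ^ a = eta d ^ b"
    have "eta d ^ b = eta d ^ a * eta d ^ (b - a)" using ab by (metis le_add_diff_inverse less_imp_le power_add)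
    then have "eta d ^ (b - a) = 1" using ab nz by simp
    with eta_pow1[of "b - a" d] ab have False by linarith }
  then show False using ne assms by (metis linorder_neqE_nat)
qed

lemma prod_lin_sub:
  assumes "A \<subseteq> {..<d}" "B \<subseteq> {..<d}"
    and eq: "(\<Prod>j\<in>A. lin d j) = (\<Prod>j\<in>B. lin d j)"
  shows "A \<subseteq> B"
proof
  fix j assume jA: "j \<in> A"
  show "j \<in> B"
  proof (rule ccontr)
    assume jB: "j \<notin> B"
    have fA: "finite A" "finite B" using assms finite_subset by auto
    have "ev (eta d ^ j) 1 (\<Prod>j\<in>A. lin d j) = 0"
      using jA fA by (simp add: prod_zero_iff) blast
    moreover have "ev (eta d ^ j) 1 (\<Prod>j\<in>B. lin d j) \<noteq> 0"
    proof -
      have "\<forall>k\<in>B. eta d ^ j - eta d ^ k \<noteq> 0"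
        using jB jA assms eta_inj[of j d] by auto
      then show ?thesis using fA by (simp add: prod_zero_iff)
    qed
    ultimately show False using eq by simp
  qed
qed

lemma ev10_prod_lin: "ev 1 0 (\<Prod>j\<in>A. lin d j) = 1"
  by simp

lemma homog_nz:
  assumes "homog d p c" "p \<noteq> 0"
  shows "\<exists>n::nat. c = 2 * of_nat n / of_nat d"
proof -
  obtain j where "coeff p j \<noteq> 0" using assms(2) by (metis leading_coeff_0_iff)
  then obtain i where "coeff (coeff p j) i \<noteq> 0" by (metis leading_coeff_0_iff)
  then show ?thesis using assms(1) unfolding homog_def by metis
qed

lemma homog_zero_const:
  assumes "homog d p 0" "d > 0"
  shows "p = cP (coeff (coeff p 0) 0)"
proof -
  have z: "coeff (coeff p j) i = 0" if "i + j > 0" for i j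
  proof (rule ccontr)
    assume "coeff (coeff p j) i \<noteq> 0"
    then have h: "2 * of_nat (i + j) / of_nat d = (0::complex)" using assms(1) unfolding homog_def by blast
    have "(of_nat (2*(i+j)) :: complex) / of_nat d = 0"
      using h by (simp only: of_nat_mult of_nat_numeral)
    then have "2*(i+j) = 0 \<or> d = 0" by (simp only: divide_eq_0_iff of_nat_eq_0_iff)
    then show False using that assms(2) by simp
  qed
  show ?thesis
  proof (rule poly_eqI)
    fix j
    show "coeff p j = coeff (cP (coeff (coeff p 0) 0)) j"
    proof (cases "j = 0")
      case True
      show ?thesis
      proof (rule poly_eqI)
        fix i show "coeff (coeff p j) i = coeff (coeff (cP (coeff (coeff p 0) 0)) j) i"
          using z[of i 0] True by (cases i) (auto simp: cP_def)
      qed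
    next
      case False
      show ?thesis
      proof (rule poly_eqI)
        fix i show "coeff (coeff p j) i = coeff (coeff (cP (coeff (coeff p 0) 0)) j) i"
          using z[of i j] False by (simp add: cP_def coeff_pCons split: nat.split)
      qed
    qed
  qed
qed

lemma homog_cP: "homog d (cP c) 0"
  by (simp add: homog_def cP_def coeff_pCons split: nat.split)

lemma homog_0: "homog d 0 c"
  by (simp add: homog_def)

theorem lemma3p12:
  fixes d :: nat and R S :: "nat set"
  assumes "d \<ge> 2" and "R \<subseteq> {..<d}" and "S \<subseteq> {..<d}"
  shows "ZMF d (Phat d R) (Phat d S) =
           (if R = S then {(cP c, cP c) | c. True} else {(0, 0)})"
proof -
  define M where "M = Phat d R"
  define N where "N = Phat d S"
  have dpos: "d > 0" using assms(1) by simp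
  have M1: "dd1 M = (\<Prod>j\<in>R. lin d j)" and M0: "dd0 M = (\<Prod>j\<in>{..<d} - R. lin d j)"
    and N1: "dd1 N = (\<Prod>j\<in>S. lin d j)" and N0: "dd0 N = (\<Prod>j\<in>{..<d} - S. lin d j)"
    by (simp_all add: M_def N_def Phat_def P_def)
  have nz: "dd1 M \<noteq> 0" "dd0 M \<noteq> 0" "dd1 N \<noteq> 0" "dd0 N \<noteq> 0"
    proof -
    have e: "ev 1 0 (0::complex poly poly) = 0" by (simp add: ev_def)
    have "ev 1 0 (dd1 M) = 1" "ev 1 0 (dd0 M) = 1" "ev 1 0 (dd1 N) = 1" "ev 1 0 (dd0 N) = 1"
      by (simp_all only: M1 M0 N1 N0 ev10_prod_lin)
    then show "dd1 M \<noteq> 0" "dd0 M \<noteq> 0" "dd1 N \<noteq> 0" "dd0 N \<noteq> 0"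
      using e by auto
  qed
  have degs: "deg1 M - deg1 N = - (deg0 M - deg0 N)"
    unfolding M_def N_def Phat_def P_def by (simp add: diff_divide_distrib add_divide_distrib)
  have sub: "ZMF d M N \<subseteq> (if R = S then {(cP c, cP c) | c. True} else {(0, 0)})"
  proof
    fix f assume "f \<in> ZMF d M N"
    then obtain f0 f1 where f: "f = (f0, f1)" "homog d f0 (deg0 M - deg0 N)"
       "homog d f1 (- (deg0 M - deg0 N))" "dd0 N * f0 = f1 * dd0 M" "dd1 N * f1 = f0 * dd1 M"
      unfolding ZMF_def using degs by auto
    show "f \<in> (if R = S then {(cP c, cP c) | c. True} else {(0, 0)})"
    proof (cases "f0 = 0")
      case True
      then have "f1 = 0" using f(4) nz by simp
      then show ?thesis using True f(1) by (auto simp: cP_def)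
    next
      case False
      then have f1nz: "f1 \<noteq> 0" using f(5) nz by auto
      obtain n where n: "deg0 M - deg0 N = 2 * of_nat n / of_nat d" using homog_nz f(2) False by blast
      obtain n' where n': "- (deg0 M - deg0 N) = 2 * of_nat n' / of_nat d" using homog_nz f(3) f1nz by blast
      have s0: "2 * of_nat n / of_nat d + 2 * of_nat n' / of_nat d = (0::complex)"
        using n n' by (metis add.right_inverse)
      have "(of_nat (2 * (n + n')) :: complex) / of_nat d = 2 * of_nat n / of_nat d + 2 * of_nat n' / of_nat d"
        by (simp add: add_divide_distrib[symmetric] distrib_left)
      then have "(of_nat (2 * (n + n')) :: complex) / of_nat d = 0" using s0 by simp
      then have "2 * (n + n') = 0" using dpos by (simp only: divide_eq_0_iff of_nat_eq_0_iff) simp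
      then have c0: "deg0 M - deg0 N = 0" using n by simp
      define a where "a = coeff (coeff f0 0) 0"
      define b where "b = coeff (coeff f1 0) 0"
      have fa: "f0 = cP a" unfolding a_def using homog_zero_const f(2) c0 dpos by simp
      have fb: "f1 = cP b" unfolding b_def using homog_zero_const f(3) c0 dpos by simp
      have "ev 1 0 (dd1 N * f1) = ev 1 0 (f0 * dd1 M)" using f(5) by simp
      then have ab: "b = a" using fa fb M1 N1 by simp
      have "dd1 N = dd1 M" using f(5) False fa fb ab by (simp add: mult.commute)
      then have "R = S" using prod_lin_sub[of R d S] prod_lin_sub[of S d R] assms M1 N1 by auto
      then show ?thesis using f(1) fa fb ab by auto
    qed
  qed
  have sup: "(if R = S then {(cP c, cP c) | c. True} else {(0, 0)}) \<subseteq> ZMF d M N"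
  proof (cases "R = S")
    case True
    then have "M = N" by (simp add: M_def N_def)
    then show ?thesis using True by (auto simp: ZMF_def homog_cP mult.commute)
  next
    case False
    then show ?thesis by (simp add: ZMF_def homog_0)
  qed
  show ?thesis using sub sup unfolding M_def N_def by blast
qed

end
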